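(* Let $V$ be a real vector space of odd finite dimension, $G\le\mathrm{GL}(V)$ a finite group such that $V$ is a non-trivial irreducible $\mathbb{R}G$-module and $-\mathrm{id}_V\notin G$, and let $n\in N_{\mathrm{GL}(V)}(G)$ have finite order, with $\nu=\mathrm{ad}_n\in\mathrm{Aut}(G)$ the automorphism $y\mapsto nyn^{-1}$. Suppose there is $g\in G$ such that $\mathrm{ad}_g\circ\nu$ has order $2$ in $\mathrm{Aut}(G)$. Then there is $h\in G$ such that $hn$ has eigenvalue $1$, i.e. $(G,V,n)$ has the $E1$-property.
   Context: For $x\in N_{\mathrm{GL}(V)}(G)$, $\mathrm{ad}_x\in\mathrm{Aut}(G)$ denotes conjugation $y\mapsto xyx^{-1}$. *)

theory Defs
  imports "HOL-Analysis.Analysis"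
begin

type_synonym 'n linmap = "real ^ 'n ^ 'n"

definition ad :: "'n::finite linmap \<Rightarrow> 'n linmap \<Rightarrow> 'n linmap" where
  "ad x y = x ** y ** matrix_inv x"

definition matpow :: "'n::finite linmap \<Rightarrow> nat \<Rightarrow> 'n linmap" where
  "matpow A k = ((\<lambda>B. B ** A) ^^ k) (mat 1)"

definition finite_GL_subgroup :: "'n::finite linmap set \<Rightarrow> bool" where
  "finite_GL_subgroup G \<longleftrightarrow> finite G \<and> G \<subseteq> {A. invertible A} \<and> mat 1 \<in> G
     \<and> (\<forall>A\<in>G. \<forall>B\<in>G. A ** B \<in> G) \<and> (\<forall>A\<in>G. matrix_inv A \<in> G)"

definition irreducible_module :: "'n::finite linmap set \<Rightarrow> bool" where
  "irreducible_module G \<longleftrightarrow>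
     (\<forall>W :: (real ^ 'n) set. subspace W \<and> (\<forall>g\<in>G. \<forall>w\<in>W. g *v w \<in> W)
        \<longrightarrow> W = {0} \<or> W = UNIV)"

definition in_normaliser :: "'n::finite linmap \<Rightarrow> 'n linmap set \<Rightarrow> bool" where
  "in_normaliser x G \<longleftrightarrow> invertible x \<and> ad x ` G = G"

text \<open>Order of an element of finite order (order 2 of an automorphism of G is
  expressed via its action on G).\<close>
definition has_order_two_on :: "('a \<Rightarrow> 'a) \<Rightarrow> 'a set \<Rightarrow> bool" where
  "has_order_two_on \<phi> G \<longleftrightarrow> (\<exists>y\<in>G. \<phi> y \<noteq> y) \<and> (\<forall>y\<in>G. \<phi> (\<phi> y) = y)"

end

theory Submission
  imports Defs
begin

lemma inv_props:
  fixes A :: "real ^ 'n::finite ^ 'n"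
  assumes "invertible A"
  shows "A ** matrix_inv A = mat 1 \<and> matrix_inv A ** A = mat 1"
  using assms unfolding invertible_def matrix_inv_def by (rule someI_ex)

lemma matpow_Suc: "matpow A (Suc k) = matpow A k ** A"
  by (simp add: matpow_def)

lemma det_matpow: "det (matpow (A::real^'n::finite^'n) k) = det A ^ k"
  by (induction k) (simp_all add: matpow_def det_mul)

lemma matpow_in:
  assumes "finite_GL_subgroup G" "A \<in> G"
  shows "matpow A k \<in> G"
  using assms by (induction k) (auto simp: matpow_def finite_GL_subgroup_def)

lemma abs_one_of_pow:
  fixes x :: real
  assumes "x ^ k = 1" "k > 0"
  shows "\<bar>x\<bar> = 1"
  using assms power_eq_1_iff by fastforce

lemma G_det:
  fixes A :: "real ^ 'n::finite ^ 'n"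
  assumes G: "finite_GL_subgroup G" and A: "A \<in> G"
  shows "\<bar>det A\<bar> = 1"
proof -
  have "range (matpow A) \<subseteq> G" using matpow_in[OF G A] by auto
  hence "finite (range (matpow A))" using G finite_subset unfolding finite_GL_subgroup_def by blast
  hence "\<not> inj (matpow A)" using finite_imageD infinite_UNIV_nat by blast
  then obtain i j where ij: "i \<noteq> j" "matpow A i = matpow A j" unfolding inj_def by blast
  have nz: "det A \<noteq> 0" using G A invertible_det_nz unfolding finite_GL_subgroup_def by auto
  have e: "det A ^ i = det A ^ j" using ij det_matpow by metis
  have "\<exists>a b. a < b \<and> det A ^ a = det A ^ b"
    using ij(1) e by (metis linorder_neqE_nat)
  then obtain a b where ab: "a < b" "det A ^ a = det A ^ b" by blast
  have "det A ^ b = det A ^ a * det A ^ (b - a)"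
    using ab(1) by (metis le_add_diff_inverse less_imp_le power_add)
  hence "det A ^ a * det A ^ (b - a) = det A ^ a * 1"
    using ab(2) by simp
  hence "det A ^ (b - a) = 1" using nz by (metis mult_left_cancel power_not_zero)
  thus ?thesis using ab(1) by (intro abs_one_of_pow[of "det A" "b - a"]) auto
qed

lemma det_scaleR:
  fixes A :: "real ^ 'n::finite ^ 'n"
  shows "det (k *\<^sub>R A) = k ^ CARD('n) * det A"
proof -
  have e: "k *\<^sub>R A = (\<chi> i. k *s A $ i)" by (simp add: vec_eq_iff)
  have "det (k *\<^sub>R A) = prod (\<lambda>i. k) (UNIV::'n set) * det ((\<chi> i. A $ i) :: real^'n^'n)"
    unfolding e by (rule det_rows_mul)
  also have "\<dots> = k ^ CARD('n) * det A" by (simp add: vec_lambda_eta)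
  finally show ?thesis .
qed

lemma det_cont:
  fixes A :: "real \<Rightarrow> real ^ 'n::finite ^ 'n"
  assumes "continuous_on S A"
  shows "continuous_on S (\<lambda>t. det (A t))"
  unfolding det_def
  by (intro continuous_intros assms)

lemma odd_eig:
  fixes c :: "real^'n::finite^'n"
  assumes odd: "odd CARD('n)"
  shows "\<exists>l. det (c - l *\<^sub>R mat 1) = 0"
proof -
  define r where "r s = det (mat 1 - s *\<^sub>R c)" for s
  have rc: "continuous_on UNIV r" unfolding r_def by (intro det_cont continuous_intros)
  have "(r \<longlongrightarrow> r 0) (at 0)" using rc unfolding continuous_on_def by auto
  moreover have "r 0 = 1" by (simp add: r_def)
  ultimately have "eventually (\<lambda>s. 0 < r s) (at 0)" by (intro order_tendstoD(1)) auto
  then obtain d where d: "d > 0" "\<forall>s. s \<noteq> 0 \<and> dist s 0 < d \<longrightarrow> r s > 0"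
    by (auto simp: eventually_at)
  define q where "q t = det (c - t *\<^sub>R mat 1)" for t
  have qc: "continuous_on UNIV q" unfolding q_def by (intro det_cont continuous_intros)
  have key: "q t = (-t)^CARD('n) * r (1/t)" if "t \<noteq> 0" for t
  proof -
    have e: "c - t *\<^sub>R mat 1 = (-t) *\<^sub>R (mat 1 - (1/t) *\<^sub>R c)"
      using that by (simp add: scaleR_diff_right scaleR_scaleR)
    show ?thesis unfolding q_def r_def e det_scaleR by (rule refl)
  qed
  have r1: "r (d/2) > 0" using d by auto
  have r2: "r (-(d/2)) > 0" using d by auto
  have q1: "q (2/d) < 0"
  proof -
    have "q (2/d) = (-(2/d))^CARD('n) * r (d/2)" using key[of "2/d"] d by simp
    moreover have "(-(2/d))^CARD('n) < 0" using odd d by (simp add: power_less_zero_eq)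
    ultimately show ?thesis using r1 by (simp add: mult_neg_pos)
  qed
  have q2: "q (-(2/d)) > 0"
  proof -
    have "q (-(2/d)) = (2/d)^CARD('n) * r (-(d/2))" using key[of "-(2/d)"] d by simp
    moreover have "(2/d)^CARD('n) > 0" using d by simp
    ultimately show ?thesis using r2 by simp
  qed
  have "\<exists>x. -(2/d) \<le> x \<and> x \<le> 2/d \<and> q x = 0"
    using q1 q2 d by (intro IVT2') (auto intro: continuous_on_subset[OF qc])
  thus ?thesis unfolding q_def by blast
qed

theorem corollary4:
  fixes G :: "(real ^ 'n::finite ^ 'n) set" and n :: "real ^ 'n ^ 'n"
  assumes "odd CARD('n)"
    and "finite_GL_subgroup G"
    and "irreducible_module G"
    and "\<exists>g\<in>G. g \<noteq> mat 1"
    and "- mat 1 \<notin> G"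
    and "in_normaliser n G"
    and "\<exists>k>0. matpow n k = mat 1"
    and "\<exists>g\<in>G. has_order_two_on (ad g \<circ> ad n) G"
  shows "\<exists>h\<in>G. \<exists>v. v \<noteq> 0 \<and> (h ** n) *v v = v"
proof -
  obtain g0 where g0: "g0 \<in> G" and hp: "has_order_two_on (ad g0 \<circ> ad n) G"
    using assms(8) by blast
  have GL: "G \<subseteq> {A. invertible A}" using assms(2) unfolding finite_GL_subgroup_def by blast
  have ig: "invertible g0" using GL g0 by blast
  have inn: "invertible n" using assms(6) unfolding in_normaliser_def by blast
  note gI = inv_props[OF ig] and nI = inv_props[OF inn]
  have gX: "matrix_inv g0 ** (g0 ** X) = X" for X :: "real^'n^'n"
    by (simp add: matrix_mul_assoc gI)
  have nX: "matrix_inv n ** (n ** X) = X" for X :: "real^'n^'n"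
    by (simp add: matrix_mul_assoc nI)
  have gX': "g0 ** (matrix_inv g0 ** X) = X" for X :: "real^'n^'n"
    by (simp add: matrix_mul_assoc gI)
  have nX': "n ** (matrix_inv n ** X) = X" for X :: "real^'n^'n"
    by (simp add: matrix_mul_assoc nI)
  define m where "m = g0 ** n"
  define M where "M = matrix_inv n ** matrix_inv g0"
  have Mm: "M ** m = mat 1" unfolding M_def m_def
    by (simp add: matrix_mul_assoc[symmetric] gX nI)
  have mM: "m ** M = mat 1" unfolding M_def m_def
    by (simp add: matrix_mul_assoc[symmetric] nX' gI)
  have MmX: "M ** (m ** X) = X" for X :: "real^'n^'n"
    by (simp add: matrix_mul_assoc Mm)
  have phi: "(ad g0 \<circ> ad n) y = m ** (y ** M)" for y
    unfolding ad_def m_def M_def by (simp add: matrix_mul_assoc[symmetric])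
  have comm: "(m ** m) ** y = y ** (m ** m)" if y: "y \<in> G" for y
  proof -
    have e: "m ** ((m ** (y ** M)) ** M) = y"
      using hp y unfolding has_order_two_on_def phi by auto
    have "y ** (m ** m) = (m ** ((m ** (y ** M)) ** M)) ** (m ** m)" by (simp add: e)
    also have "\<dots> = m ** (m ** y)" by (simp add: matrix_mul_assoc[symmetric] MmX Mm)
    finally show ?thesis by (simp add: matrix_mul_assoc)
  qed
  define c where "c = m ** m"
  obtain l where l: "det (c - l *\<^sub>R mat 1) = 0" using odd_eig[OF assms(1)] by blast
  hence "\<not> invertible (c - l *\<^sub>R mat 1)" using invertible_det_nz by blast
  hence "\<not> inj ((*v) (c - l *\<^sub>R mat 1))"
    using matrix_left_invertible_injective invertible_left_inverse by blast
  then obtain x y where xy: "x \<noteq> y" "(c - l *\<^sub>R mat 1) *v x = (c - l *\<^sub>R mat 1) *v y"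
    unfolding inj_def by blast
  define v0 where "v0 = x - y"
  have v0: "v0 \<noteq> 0" using xy v0_def by simp
  have "(c - l *\<^sub>R mat 1) *v v0 = 0" using xy unfolding v0_def
    by (simp add: matrix_vector_mult_diff_distrib)
  hence cv0: "c *v v0 = l *\<^sub>R v0"
    by (simp add: matrix_vector_mult_diff_rdistrib scaleR_matrix_vector_assoc[symmetric])
  define W where "W = {v. c *v v = l *\<^sub>R v}"
  have sW: "subspace W" unfolding subspace_def W_def
    by (simp add: matrix_vector_right_distrib matrix_scaleR_vector_ac scaleR_matrix_vector_assoc[symmetric] scaleR_right_distrib)
  have iW: "\<forall>g\<in>G. \<forall>w\<in>W. g *v w \<in> W"
  proof (intro ballI)
    fix g w assume g: "g \<in> G" and w: "w \<in> W"
    have "c *v (g *v w) = (c ** g) *v w" by (simp add: matrix_vector_mul_assoc)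
    also have "\<dots> = (g ** c) *v w" using comm[OF g] c_def by simp
    also have "\<dots> = g *v (c *v w)" by (simp add: matrix_vector_mul_assoc)
    also have "\<dots> = l *\<^sub>R (g *v w)" using w W_def by (simp add: matrix_scaleR_vector_ac scaleR_matrix_vector_assoc[symmetric])
    finally show "g *v w \<in> W" unfolding W_def by simp
  qed
  have "W = {0} \<or> W = UNIV" using assms(3) sW iW unfolding irreducible_module_def by blast
  moreover have "v0 \<in> W" using cv0 W_def by simp
  ultimately have "W = UNIV" using v0 by blast
  hence cv: "c *v v = l *\<^sub>R v" for v unfolding W_def by blast
  have "c = l *\<^sub>R mat 1" unfolding matrix_eq
    by (simp add: cv scaleR_matrix_vector_assoc[symmetric])
  hence dc: "det c = l ^ CARD('n)" by (simp add: det_scaleR)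
  have dg: "\<bar>det g0\<bar> = 1" using G_det[OF assms(2) g0] .
  obtain k where k: "k > 0" "matpow n k = mat 1" using assms(7) by blast
  have "det n ^ k = 1" using k det_matpow[of n k] by simp
  hence dn: "\<bar>det n\<bar> = 1" using k(1) abs_one_of_pow by blast
  have "det c = (det g0 * det n)^2" unfolding c_def m_def by (simp add: det_mul power2_eq_square)
  also have "\<dots> = \<bar>det g0 * det n\<bar>^2" by simp
  also have "\<dots> = 1" using dg dn by (simp add: abs_mult)
  finally have lp: "l ^ CARD('n) = 1" using dc by simp
  have "\<bar>l\<bar> = 1" using lp abs_one_of_pow[of l "CARD('n)"] by simp
  hence l1: "l = 1" using assms(1) lp by (cases "l \<ge> 0") auto
  have mm: "m *v (m *v v) = v" for v
    using cv[of v] l1 unfolding c_def by (simp add: matrix_vector_mul_assoc)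
  show ?thesis
  proof (cases "\<exists>v. m *v v + v \<noteq> 0")
    case True
    then obtain v where v: "m *v v + v \<noteq> 0" by blast
    have "m *v (m *v v + v) = m *v v + v" by (simp add: matrix_vector_right_distrib mm)
    thus ?thesis using v g0 unfolding m_def by blast
  next
    case False
    hence mneg: "m *v v = - v" for v by (metis add_eq_0_iff2 add.commute)
    have "(ad g0 \<circ> ad n) y = y" for y
    proof -
      have Mv: "M *v v = - v" for v
      proof -
        have "v = (m ** M) *v v" using mM by simp
        also have "\<dots> = m *v (M *v v)" by (simp add: matrix_vector_mul_assoc)
        also have "\<dots> = - (M *v v)" by (rule mneg)
        finally show ?thesis by (metis minus_minus)
      qed
      show ?thesis unfolding phi matrix_eq
        by (simp add: matrix_vector_mul_assoc[symmetric] mneg Mv vec.neg)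
    qed
    thus ?thesis using hp unfolding has_order_two_on_def by blast
  qed
qed


end
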